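(* For every $n \geq 1$, the map $\psi$ is a bijection from $\mathcal{S}^{(1)}_n$, the set of skeletons of planar linear normal $\lambda$-terms with $n$ atoms, onto $\mathcal{V}_{n-1}$, the set of v-trees with $n-1$ edges.
   Context: $\lambda$-terms, linear (closed, each abstraction binds exactly one atom), normal (no sub-term $(\lambda x.u)\,v$) and planar terms are standard; the skeleton of a term is the plane unary-binary tree (atom $\mapsto$ leaf, application $u\,v \mapsto$ binary node with left subtree from $u$ and right subtree from $v$, abstraction $\mapsto$ unary node), and planarity means the edges from each leaf's parent to its binding unary node, drawn counter-clockwise and entering from the right, do not cross; the number of atoms is the number of leaves. For a unary-binary tree $S$ and node $u$, $S_u$ is the subtree at $u$, and $\operatorname{leaf}, \operatorname{unary}$ count leaves and unary nodes. The map $\psi$: for $S \in \mathcal{S}^{(1)}_n$, let $T$ be the plane tree whose nodes are a new root $r$ and the binary nodes of $S$. For a node $u$ of $T$, let $R(u)$ be the right subtree of $u$ in $S$ if $u$ is a binary node, and $R(r)=S$. The children of $u$ in $T$, from left to right, are $x_1, \ldots, x_m$ where $x_1$ is the first binary node of $R(u)$ reached from its root through a (possibly empty) chain of unary nodes, and $x_{i+1}$ is the left child of $x_i$ in $S$ as long as it is a binary node (no children if $R(u)$ has no binary node). Label each binary node $u$ by $\ell(u) = \operatorname{leaf}(S_v) - \operatorname{unary}(S_v)$, $v$ the right child of $u$ in $S$, and label $r$ by $\ell(r) = \operatorname{leaf}(S_w) - \operatorname{unary}(S_w)$, where $w$ is the first node of $S$ (from the root) that is not unary. Set $\psi(S)=(T,\ell)$.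 A v-tree is a plane tree $T$ with integer node labels $\ell$ such that: (i) leaves have label $0$ or $1$; (ii) every non-root node $u$ with children $v_1,\ldots,v_k$ satisfies $0 \leq \ell(u) \leq 1 + \sum_{i=1}^k \ell(v_i)$; (iii) the root $r$ with children $v_1,\ldots,v_k$ satisfies $\ell(r) = 1 + \sum_{i=1}^k \ell(v_i)$. Its size is its number of edges. *)

theory Defs
  imports Main
begin

datatype lterm = Var nat | App lterm lterm | Lam nat lterm

inductive planar :: "nat list \<Rightarrow> lterm \<Rightarrow> bool" where
  pl_var: "planar [x] (Var x)"
| pl_app: "planar G1 u \<Longrightarrow> planar G2 v \<Longrightarrow> planar (G1 @ G2) (App u v)"
| pl_lam: "x \<notin> set G \<Longrightarrow> planar (G @ [x]) t \<Longrightarrow> planar G (Lam x t)"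

fun normal :: "lterm \<Rightarrow> bool" where
  "normal (Var x) = True"
| "normal (App (Lam x u) v) = False"
| "normal (App u v) = (normal u \<and> normal v)"
| "normal (Lam x t) = normal t"

datatype ubtree = Leaf | Unary ubtree | Bin ubtree ubtree

fun skel :: "lterm \<Rightarrow> ubtree" where
  "skel (Var x) = Leaf"
| "skel (App u v) = Bin (skel u) (skel v)"
| "skel (Lam x t) = Unary (skel t)"

fun leaves :: "ubtree \<Rightarrow> nat" where
  "leaves Leaf = 1"
| "leaves (Unary t) = leaves t"
| "leaves (Bin l r) = leaves l + leaves r"

fun unaries :: "ubtree \<Rightarrow> nat" where
  "unaries Leaf = 0"
| "unaries (Unary t) = Suc (unaries t)"
| "unaries (Bin l r) = unaries l + unaries r"

definition S1 :: "nat \<Rightarrow> ubtree set" where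
  "S1 n = {skel t | t. planar [] t \<and> normal t \<and> leaves (skel t) = n}"

datatype ltree = Node int "ltree list"

fun lab :: "ltree \<Rightarrow> int" where
  "lab (Node a ts) = a"

definition lbl :: "ubtree \<Rightarrow> int" where
  "lbl s = int (leaves s) - int (unaries s)"

fun strip :: "ubtree \<Rightarrow> ubtree" where
  "strip (Unary t) = strip t"
| "strip t = t"

text \<open>\<open>ch R\<close>: the list of T-children for a node u with \<open>R(u) = R\<close>: starting from the first
  binary node x1 of R reached through a chain of unary nodes, then x(i+1) = left child of x(i)
  as long as it is binary. \<open>lch\<close> continues along left children.\<close>
fun ch :: "ubtree \<Rightarrow> ltree list" and lch :: "ubtree \<Rightarrow> ltree list" where
  "ch Leaf = []"
| "ch (Unary t) = ch t"
| "ch (Bin l r) = Node (lbl r) (ch r) # lch l"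
| "lch (Bin l r) = Node (lbl r) (ch r) # lch l"
| "lch Leaf = []"
| "lch (Unary t) = []"

definition psi :: "ubtree \<Rightarrow> ltree" where
  "psi S = Node (lbl (strip S)) (ch S)"

fun vnode :: "ltree \<Rightarrow> bool" where
  "vnode (Node a ts) =
     ((ts = [] \<longrightarrow> a = 0 \<or> a = 1) \<and>
      0 \<le> a \<and> a \<le> 1 + sum_list (map lab ts) \<and>
      (\<forall>t\<in>set ts. vnode t))"

fun vtree :: "ltree \<Rightarrow> bool" where
  "vtree (Node a ts) =
     ((ts = [] \<longrightarrow> a = 0 \<or> a = 1) \<and>
      a = 1 + sum_list (map lab ts) \<and>
      (\<forall>t\<in>set ts. vnode t))"

fun nodes :: "ltree \<Rightarrow> nat" where
  "nodes (Node a ts) = Suc (sum_list (map nodes ts))"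

text \<open>Size of a plane tree = number of edges = number of nodes - 1.\<close>
definition V :: "nat \<Rightarrow> ltree set" where
  "V m = {T. vtree T \<and> nodes T - 1 = m}"

end

theory Submission
  imports Defs
begin

lemma lbl_Leaf[simp]: "lbl Leaf = 1" by (simp add: lbl_def)
lemma lbl_Unary[simp]: "lbl (Unary t) = lbl t - 1" by (simp add: lbl_def)
lemma lbl_Bin[simp]: "lbl (Bin l r) = lbl l + lbl r" by (simp add: lbl_def)

fun okt :: "ubtree \<Rightarrow> bool" where
  "okt Leaf = True"
| "okt (Unary t) = (okt t \<and> lbl t \<ge> 1)"
| "okt (Bin l r) = (okt l \<and> okt r)"

fun nrm :: "ubtree \<Rightarrow> bool" where
  "nrm Leaf = True"
| "nrm (Unary t) = nrm t"
| "nrm (Bin l r) = ((\<forall>s. l \<noteq> Unary s) \<and> nrm l \<and> nrm r)"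

lemma okt_nonneg: "okt S \<Longrightarrow> lbl S \<ge> 0"
  by (induction S) auto

lemma planar_skel: "planar G t \<Longrightarrow> okt (skel t) \<and> lbl (skel t) = int (length G)"
  by (induction rule: planar.induct) auto

lemma normal_nrm: "normal t \<Longrightarrow> nrm (skel t)"
proof (induction t)
  case (App u v)
  then show ?case by (cases u) auto
qed auto

lemma realize: "okt S \<Longrightarrow> nrm S \<Longrightarrow> lbl S = int (length G) \<Longrightarrow>
   \<exists>t. planar G t \<and> skel t = S \<and> normal t"
proof (induction S arbitrary: G)
  case Leaf
  then obtain x where "G = [x]"
    by (cases G) auto
  then show ?case by (intro exI[of _ "Var x"]) (auto intro: planar.intros)
next
  case (Unary s)
  obtain x :: nat where x: "x \<notin> set G"
    using finite_set[of G] by (meson ex_new_if_finite infinite_UNIV_nat)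
  from Unary have "lbl s = int (length (G @ [x]))" by simp
  with Unary.IH[of "G @ [x]"] Unary.prems obtain t where "planar (G @ [x]) t" "skel t = s" "normal t"
    by auto
  then show ?case using x by (intro exI[of _ "Lam x t"]) (auto intro: planar.intros)
next
  case (Bin l r)
  have l0: "lbl l \<ge> 0" "lbl r \<ge> 0" using Bin okt_nonneg by auto
  define G1 where "G1 = take (nat (lbl l)) G"
  define G2 where "G2 = drop (nat (lbl l)) G"
  have "lbl l = int (length G1)" "lbl r = int (length G2)"
    using Bin l0 unfolding G1_def G2_def by auto
  with Bin obtain tl tr where tl: "planar G1 tl" "skel tl = l" "normal tl"
    and tr: "planar G2 tr" "skel tr = r" "normal tr" by fastforce
  have "planar (G1 @ G2) (App tl tr)" using tl tr by (auto intro: planar.intros)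
  moreover have "normal (App tl tr)" using tl tr Bin by (cases tl) auto
  ultimately show ?case using tl tr unfolding G1_def G2_def by auto
qed

lemma S1_char: "S1 n = {S. okt S \<and> nrm S \<and> lbl S = 0 \<and> leaves S = n}"
proof -
  have "S \<in> S1 n" if "okt S" "nrm S" "lbl S = 0" "leaves S = n" for S
    using realize[of S "[]"] that unfolding S1_def by auto
  moreover have "okt S \<and> nrm S \<and> lbl S = 0 \<and> leaves S = n" if "S \<in> S1 n" for S
    using that planar_skel normal_nrm unfolding S1_def by fastforce
  ultimately show ?thesis by blast
qed

fun combt :: "ubtree list \<Rightarrow> ubtree" where
  "combt [] = Leaf"
| "combt (x # xs) = Bin (combt xs) x"

fun pinv :: "ltree \<Rightarrow> ubtree" where
  "pinv (Node a ts) = (Unary ^^ nat (1 + sum_list (map lab ts) - a)) (combt (map pinv ts))"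

fun rinv :: "ltree \<Rightarrow> ubtree" where
  "rinv (Node a ts) = pinv (Node 0 ts)"

fun upre :: "ubtree \<Rightarrow> nat" where
  "upre (Unary t) = Suc (upre t)"
| "upre _ = 0"

definition nd :: "ubtree \<Rightarrow> ltree" where
  "nd X = Node (lbl X) (ch X)"

lemma pow_strip[simp]: "strip ((Unary ^^ j) Y) = strip Y"
  by (induction j) auto
lemma pow_ch[simp]: "ch ((Unary ^^ j) Y) = ch Y"
  by (induction j) auto
lemma pow_lbl[simp]: "lbl ((Unary ^^ j) Y) = lbl Y - int j"
  by (induction j) auto
lemma pow_leaves[simp]: "leaves ((Unary ^^ j) Y) = leaves Y"
  by (induction j) auto
lemma pow_nrm[simp]: "nrm ((Unary ^^ j) Y) = nrm Y"
  by (induction j) auto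
lemma pow_okt: "okt Y \<Longrightarrow> lbl Y - int j \<ge> 0 \<Longrightarrow> okt ((Unary ^^ j) Y)"
  by (induction j) auto

lemma strip_combt[simp]: "strip (combt xs) = combt xs"
  by (cases xs) auto
lemma lch_combt[simp]: "lch (combt xs) = ch (combt xs)"
  by (cases xs) auto
lemma ch_combt[simp]: "ch (combt xs) = map nd xs"
  by (induction xs) (auto simp: nd_def)
lemma lbl_combt[simp]: "lbl (combt xs) = 1 + sum_list (map lbl xs)"
  by (induction xs) auto
lemma leaves_combt[simp]: "leaves (combt xs) = 1 + sum_list (map leaves xs)"
  by (induction xs) auto
lemma nrm_combt: "\<forall>x\<in>set xs. nrm x \<Longrightarrow> nrm (combt xs)"
  by (induction xs) (auto, case_tac xs, auto)
lemma okt_combt: "\<forall>x\<in>set xs. okt x \<Longrightarrow> okt (combt xs)"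
  by (induction xs) auto

lemma upre_strip: "X = (Unary ^^ upre X) (strip X)"
  by (induction X) auto

lemma lbl_upre: "lbl X = lbl (strip X) - int (upre X)"
  by (induction X) auto

lemma lbl_strip: "nrm X \<Longrightarrow> lbl (strip X) = 1 + sum_list (map lab (ch X))"
proof (induction X)
  case (Bin l r)
  then show ?case by (cases l) (auto simp: nd_def)
qed auto

lemma ch_strip_nil: "ch X = [] \<Longrightarrow> strip X = Leaf"
  by (induction X) auto

lemma pinv_back: "nrm X \<Longrightarrow> combt (map pinv (ch X)) = strip X \<and> pinv (nd X) = X"
proof (induction X)
  case Leaf
  then show ?case by (simp add: nd_def)
next
  case (Unary Y)
  then have c: "combt (map pinv (ch (Unary Y))) = strip (Unary Y)" by simp
  have "pinv (nd (Unary Y)) = (Unary ^^ nat (lbl (strip (Unary Y)) - lbl (Unary Y))) (strip (Unary Y))"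
    using c lbl_strip[of "Unary Y"] Unary.prems by (simp add: nd_def)
  also have "\<dots> = Unary Y"
  proof -
    have e: "nat (int (upre Y) + 1) = Suc (upre Y)" by simp
    show ?thesis using lbl_upre[of Y] upre_strip[of Y] by (simp add: e)
  qed
  finally show ?case using c by simp
next
  case (Bin l r)
  then have c: "combt (map pinv (ch (Bin l r))) = strip (Bin l r)" by (cases l) (auto simp: nd_def)
  have "pinv (nd (Bin l r)) = (Unary ^^ nat (lbl (strip (Bin l r)) - lbl (Bin l r))) (strip (Bin l r))"
    using c lbl_strip[of "Bin l r"] Bin.prems by (simp add: nd_def del: strip.simps)
  also have "\<dots> = Bin l r" by simp
  finally show ?case using c by simp
qed

lemma vnode_ch: "nrm X \<Longrightarrow> okt X \<Longrightarrow> vnode (nd X) \<and> (\<forall>t\<in>set (ch X). vnode t)"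
proof (induction X)
  case Leaf
  then show ?case by (simp add: nd_def)
next
  case (Unary Y)
  have a: "\<forall>t\<in>set (ch (Unary Y)). vnode t" using Unary by auto
  have "ch (Unary Y) = [] \<Longrightarrow> lbl (Unary Y) = 0 \<or> lbl (Unary Y) = 1"
    using ch_strip_nil[of "Unary Y"] lbl_upre[of "Unary Y"] okt_nonneg[of "Unary Y"] Unary.prems
    by simp
  moreover have "lbl (Unary Y) \<le> 1 + sum_list (map lab (ch (Unary Y)))"
    using lbl_strip[of "Unary Y"] lbl_upre[of "Unary Y"] Unary.prems by simp
  ultimately show ?case using a okt_nonneg[of "Unary Y"] Unary.prems
    unfolding nd_def by (simp del: lbl_Unary ch.simps)
next
  case (Bin l r)
  have cb: "ch (Bin l r) = nd r # ch l" using Bin.prems by (cases l) (auto simp: nd_def)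
  have a: "\<forall>t\<in>set (ch (Bin l r)). vnode t" using Bin by (simp only: cb) auto
  have "lbl (Bin l r) \<le> 1 + sum_list (map lab (ch (Bin l r)))"
    using lbl_strip[of "Bin l r"] lbl_upre[of "Bin l r"] Bin.prems by simp
  then show ?case using a okt_nonneg[of "Bin l r"] Bin.prems
    unfolding nd_def by (simp add: cb del: lbl_Bin ch.simps)
qed

lemma nodes_ch: "nrm X \<Longrightarrow> sum_list (map nodes (ch X)) + 1 = leaves X"
proof (induction X)
  case (Bin l r)
  then show ?case by (cases l) auto
qed auto

lemma vnode_lab_nonneg: "vnode t \<Longrightarrow> lab t \<ge> 0"
  by (cases t) auto

lemma sum_nonneg_lab: "\<forall>t\<in>set ts. vnode t \<Longrightarrow> sum_list (map lab ts) \<ge> 0"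
  by (induction ts) (auto simp: vnode_lab_nonneg)

lemma pinv_props: "vnode T \<Longrightarrow> nd (pinv T) = T \<and> nrm (pinv T) \<and> okt (pinv T)
   \<and> lbl (pinv T) = lab T \<and> leaves (pinv T) = nodes T"
proof (induction T)
  case (Node a ts)
  then have IH: "\<And>t. t \<in> set ts \<Longrightarrow> nd (pinv t) = t \<and> nrm (pinv t) \<and> okt (pinv t)
     \<and> lbl (pinv t) = lab t \<and> leaves (pinv t) = nodes t" by auto
  have le: "a \<le> 1 + sum_list (map lab ts)" "0 \<le> a" using Node.prems by auto
  have m1: "map (nd \<circ> pinv) ts = ts" using IH by (intro map_idI) auto
  have m2: "map (lbl \<circ> pinv) ts = map lab ts" using IH by (intro map_cong) auto
  have s2: "sum_list (map (lbl \<circ> pinv) ts) = sum_list (map lab ts)" by (simp only: m2)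
  have m3: "map (leaves \<circ> pinv) ts = map nodes ts" using IH by (intro map_cong) auto
  have s3: "sum_list (map (leaves \<circ> pinv) ts) = sum_list (map nodes ts)" by (simp only: m3)
  have l: "lbl (pinv (Node a ts)) = a" using le by (simp add: s2)
  have "nd (pinv (Node a ts)) = Node a ts" using l m1 by (simp add: nd_def del: pinv.simps) simp
  moreover have "nrm (pinv (Node a ts))" using IH by (auto intro!: nrm_combt)
  moreover have "okt (pinv (Node a ts))"
    using IH le by (auto intro!: pow_okt okt_combt simp: s2)
  moreover have "leaves (pinv (Node a ts)) = nodes (Node a ts)" by (simp add: s3)
  ultimately show ?case using l by simp
qed

theorem proposition10:
  fixes n :: nat
  assumes "n \<ge> 1"
  shows "bij_betw psi (S1 n) (V (n - 1))"
proof (rule bij_betw_byWitness[where f'=rinv])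
  show "\<forall>S\<in>S1 n. rinv (psi S) = S"
  proof
    fix S assume "S \<in> S1 n"
    then have S: "okt S" "nrm S" "lbl S = 0" "leaves S = n" by (auto simp: S1_char)
    have b: "combt (map pinv (ch S)) = strip S" using pinv_back[OF S(2)] by simp
    have "rinv (psi S) = (Unary ^^ nat (lbl (strip S))) (strip S)"
      using b lbl_strip[OF S(2)] by (simp add: psi_def)
    also have "\<dots> = S" using lbl_upre[of S] S(3) upre_strip[of S] by simp
    finally show "rinv (psi S) = S" .
  qed
next
  show "\<forall>T\<in>V (n - 1). psi (rinv T) = T"
  proof
    fix T assume "T \<in> V (n - 1)"
    then obtain a ts where T: "T = Node a ts" "vtree (Node a ts)" by (cases T) (auto simp: V_def)
    have IH: "\<And>t. t \<in> set ts \<Longrightarrow> nd (pinv t) = t \<and> lbl (pinv t) = lab t"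
      using T pinv_props by auto
    have m1: "map (nd \<circ> pinv) ts = ts" using IH by (intro map_idI) auto
    have m2: "map (lbl \<circ> pinv) ts = map lab ts" using IH by (intro map_cong) auto
  have s2: "sum_list (map (lbl \<circ> pinv) ts) = sum_list (map lab ts)" by (simp only: m2)
    show "psi (rinv T) = T" using T m1 by (simp add: psi_def s2)
  qed
next
  show "psi ` S1 n \<subseteq> V (n - 1)"
  proof
    fix T assume "T \<in> psi ` S1 n"
    then obtain S where "S \<in> S1 n" and TS: "T = psi S" by auto
    then have S: "okt S" "nrm S" "lbl S = 0" "leaves S = n" by (auto simp: S1_char)
    have v: "\<forall>t\<in>set (ch S). vnode t" using vnode_ch[OF S(2,1)] by simp
    have "ch S = [] \<Longrightarrow> lbl (strip S) = 1" using ch_strip_nil by auto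
    then have "vtree T" using v lbl_strip[OF S(2)] TS by (simp add: psi_def)
    moreover have "nodes T = n" using nodes_ch[OF S(2)] S(4) TS by (simp add: psi_def)
    ultimately show "T \<in> V (n - 1)" by (simp add: V_def)
  qed
next
  show "rinv ` V (n - 1) \<subseteq> S1 n"
  proof
    fix S assume "S \<in> rinv ` V (n - 1)"
    then obtain T where "T \<in> V (n - 1)" and ST: "S = rinv T" by auto
    then obtain a ts where T: "T = Node a ts" "vtree (Node a ts)" "nodes T - 1 = n - 1"
      by (cases T) (auto simp: V_def)
    have IH: "\<And>t. t \<in> set ts \<Longrightarrow> nrm (pinv t) \<and> okt (pinv t)
       \<and> lbl (pinv t) = lab t \<and> leaves (pinv t) = nodes t"
      using T pinv_props by auto
    have m2: "map (lbl \<circ> pinv) ts = map lab ts" using IH by (intro map_cong) auto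
  have s2: "sum_list (map (lbl \<circ> pinv) ts) = sum_list (map lab ts)" by (simp only: m2)
    have m3: "map (leaves \<circ> pinv) ts = map nodes ts" using IH by (intro map_cong) auto
  have s3: "sum_list (map (leaves \<circ> pinv) ts) = sum_list (map nodes ts)" by (simp only: m3)
    have s0: "sum_list (map lab ts) \<ge> 0" using T sum_nonneg_lab by auto
    have "nodes T = n" using T(3) assms by (simp add: T(1))
    then have "okt S \<and> nrm S \<and> lbl S = 0 \<and> leaves S = n"
      using ST T s0 IH by (auto intro!: pow_okt okt_combt nrm_combt simp: s2 s3)
    then show "S \<in> S1 n" by (simp add: S1_char)
  qed
qed

end
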